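(* Let $n\ge2$ and $\alpha\in[0,1)$ with $\alpha\le1/n$. For $x,y>0$ put $Q_\alpha=Q_\alpha(x,y)=e^{\mathrm{i}\pi\alpha/2}x+e^{-\mathrm{i}\pi\alpha/2}y$ and $$F^\alpha_{n,0}(x,y)=\sum_{A\in\mathcal A_n,\ \mu(A)=0}Q_\alpha^{2\nu(A)}\,\overline{Q_\alpha}^{\,n(n-1)-2\nu(A)}.$$ Then $F^\alpha_{n,0}(x,y)>0$ for all $x,y>0$.
   Context: $\mathcal A_n$ is the set of $n\times n$ alternating sign matrices: matrices with entries in $\{0,1,-1\}$ such that every row and every column sums to $1$ and the nonzero entries in each row and each column alternate in sign. For $A=(A_{ij})\in\mathcal A_n$, $\mu(A)$ is the number of entries equal to $-1$, and $\nu(A)=\sum_{1\le i<i'\le n,\ 1\le j<j'\le n}A_{ij}A_{i'j'}$. (Matrices with $\mu(A)=0$ are exactly the $n\times n$ permutation matrices.) *)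

theory Defs
  imports Complex_Main
begin

text \<open>An n x n matrix is represented as a function nat => nat => int, with rows and
  columns indexed by 0..<n and entries outside this range equal to 0.\<close>

definition alt_signs :: "(nat \<Rightarrow> int) \<Rightarrow> nat \<Rightarrow> bool" where
  "alt_signs v n \<longleftrightarrow>
     (\<forall>j j'. j < j' \<and> j' < n \<and> v j \<noteq> 0 \<and> v j' \<noteq> 0 \<and>
        (\<forall>k. j < k \<and> k < j' \<longrightarrow> v k = 0) \<longrightarrow> v j' = - v j)"

definition ASM :: "nat \<Rightarrow> (nat \<Rightarrow> nat \<Rightarrow> int) set" where
  "ASM n = {A. (\<forall>i j. (n \<le> i \<or> n \<le> j) \<longrightarrow> A i j = 0)
              \<and> (\<forall>i<n. \<forall>j<n. A i j \<in> {0, 1, -1})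
              \<and> (\<forall>i<n. (\<Sum>j<n. A i j) = 1)
              \<and> (\<forall>j<n. (\<Sum>i<n. A i j) = 1)
              \<and> (\<forall>i<n. alt_signs (\<lambda>j. A i j) n)
              \<and> (\<forall>j<n. alt_signs (\<lambda>i. A i j) n)}"

definition asm_mu :: "nat \<Rightarrow> (nat \<Rightarrow> nat \<Rightarrow> int) \<Rightarrow> nat" where
  "asm_mu n A = card {(i, j). i < n \<and> j < n \<and> A i j = -1}"

definition asm_nu :: "nat \<Rightarrow> (nat \<Rightarrow> nat \<Rightarrow> int) \<Rightarrow> int" where
  "asm_nu n A = (\<Sum>i<n. \<Sum>i'<n. \<Sum>j<n. \<Sum>j'<n.
       if i < i' \<and> j < j' then A i j * A i' j' else 0)"

definition Qa :: "real \<Rightarrow> real \<Rightarrow> real \<Rightarrow> complex" where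
  "Qa \<alpha> x y = exp (\<i> * of_real (pi * \<alpha> / 2)) * of_real x
             + exp (- \<i> * of_real (pi * \<alpha> / 2)) * of_real y"

definition F0 :: "nat \<Rightarrow> real \<Rightarrow> real \<Rightarrow> real \<Rightarrow> complex" where
  "F0 n \<alpha> x y = (\<Sum>A \<in> {A \<in> ASM n. asm_mu n A = 0}.
      (Qa \<alpha> x y) powi (2 * asm_nu n A)
      * (cnj (Qa \<alpha> x y)) powi (int (n * (n - 1)) - 2 * asm_nu n A))"

end

theory Submission imports Defs begin



definition Perm :: "nat \<Rightarrow> (nat \<Rightarrow> nat \<Rightarrow> int) set" where
  "Perm n = {A. (\<forall>i j. (n \<le> i \<or> n \<le> j) \<longrightarrow> A i j = 0)
              \<and> (\<forall>i<n. \<forall>j<n. A i j \<in> {0, 1})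
              \<and> (\<forall>i<n. (\<Sum>j<n. A i j) = 1)
              \<and> (\<forall>j<n. (\<Sum>i<n. A i j) = 1)}"

definition gsh :: "nat \<Rightarrow> nat \<Rightarrow> nat" where
  "gsh c j = (if j < c then j else Suc j)"

definition ins :: "nat \<Rightarrow> nat \<Rightarrow> (nat \<Rightarrow> nat \<Rightarrow> int) \<Rightarrow> nat \<Rightarrow> nat \<Rightarrow> int" where
  "ins n c B i j = (if i < n \<and> j < Suc n \<and> j \<noteq> c then B i (if j < c then j else j - 1)
                    else if i = n \<and> j = c then 1 else 0)"

lemma sum_skip:
  fixes F :: "nat \<Rightarrow> 'a::comm_monoid_add"
  shows "c \<le> n \<Longrightarrow> F c = 0 \<Longrightarrow> (\<Sum>j<Suc n. F j) = (\<Sum>j<n. F (gsh c j))"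
proof (induction n arbitrary: c)
  case 0
  then show ?case by simp
next
  case (Suc n)
  show ?case
  proof (cases "c = Suc n")
    case True
    have "(\<Sum>j<Suc n. F (gsh c j)) = (\<Sum>j<Suc n. F j)"
      by (rule sum.cong) (auto simp: gsh_def True)
    then show ?thesis using Suc.prems True by simp
  next
    case False
    then have "c \<le> n" using Suc.prems by simp
    from Suc.IH[OF this Suc.prems(2)] show ?thesis
      using \<open>c \<le> n\<close> by (simp add: gsh_def)
  qed
qed

lemma sum01_other:
  fixes f :: "'b \<Rightarrow> int"
  assumes "finite S" "\<forall>x\<in>S. f x \<in> {0,1}" "sum f S = 1" "j \<in> S" "f j = 1" "k \<in> S" "k \<noteq> j"
  shows "f k = 0"
proof -
  have "sum f S = f j + sum f (S - {j})" using assms by (simp add: sum.remove)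
  then have "sum f (S - {j}) = 0" using assms by simp
  moreover have "\<forall>x\<in>S - {j}. 0 \<le> f x" using assms(2) by auto
  ultimately have "\<forall>x\<in>S - {j}. f x = 0" using sum_nonneg_eq_0_iff[of "S - {j}" f] assms(1) by blast
  then show ?thesis using assms by auto
qed

lemma sum01_ex:
  fixes f :: "'b \<Rightarrow> int"
  assumes "\<forall>x\<in>S. f x \<in> {0,1}" "sum f S = 1"
  shows "\<exists>j\<in>S. f j = 1"
proof (rule ccontr)
  assume "\<not> ?thesis"
  then have "\<forall>x\<in>S. f x = 0" using assms(1) by auto
  then have "sum f S = 0" by simp
  then show False using assms by simp
qed

lemma gsh_less: "c \<le> n \<Longrightarrow> j < n \<Longrightarrow> gsh c j < Suc n" by (simp add: gsh_def)
lemma gsh_ne: "gsh c j \<noteq> c" by (simp add: gsh_def)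
lemma gsh_mono: "gsh c j < gsh c j' \<longleftrightarrow> j < j'" by (auto simp: gsh_def)
lemma ins_gsh: "i < n \<Longrightarrow> j < n \<Longrightarrow> c \<le> n \<Longrightarrow> ins n c B i (gsh c j) = B i j"
  by (auto simp: ins_def gsh_def)

lemma ins_Perm:
  assumes B: "B \<in> Perm n" and c: "c \<le> n"
  shows "ins n c B \<in> Perm (Suc n)"
proof -
  let ?A = "ins n c B"
  have z: "\<forall>i j. (n \<le> i \<or> n \<le> j) \<longrightarrow> B i j = 0" and e: "\<forall>i<n. \<forall>j<n. B i j \<in> {0, 1}"
    and r: "\<forall>i<n. (\<Sum>j<n. B i j) = 1" and cl: "\<forall>j<n. (\<Sum>i<n. B i j) = 1"
    using B by (auto simp: Perm_def)
  have 1: "\<forall>i j. (Suc n \<le> i \<or> Suc n \<le> j) \<longrightarrow> ?A i j = 0" using c by (auto simp: ins_def)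
  have 2: "\<forall>i<Suc n. \<forall>j<Suc n. ?A i j \<in> {0, 1}"
  proof (intro allI impI)
    fix i j assume "i < Suc n" "j < Suc n"
    show "?A i j \<in> {0,1}"
    proof (cases "i < n \<and> j \<noteq> c")
      case True
      then have "(if j < c then j else j - 1) < n" using \<open>j < Suc n\<close> c by auto
      then show ?thesis using e True \<open>j < Suc n\<close> by (simp add: ins_def)
    qed (auto simp: ins_def)
  qed
  have 3: "(\<Sum>j<Suc n. ?A i j) = 1" if "i < Suc n" for i
  proof (cases "i = n")
    case True
    have "(\<Sum>j<Suc n. ?A i j) = (\<Sum>j<Suc n. if j = c then 1 else 0)"
      by (rule sum.cong) (auto simp: ins_def True)
    also have "\<dots> = 1" using c by simp
    finally show ?thesis .
  next
    case False
    then have "i < n" using that by simp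
    have "(\<Sum>j<Suc n. ?A i j) = (\<Sum>j<n. ?A i (gsh c j))"
      by (rule sum_skip[OF c]) (simp add: ins_def False)
    also have "\<dots> = (\<Sum>j<n. B i j)"
      by (rule sum.cong) (auto simp: ins_gsh \<open>i<n\<close> c)
    finally show ?thesis using r \<open>i<n\<close> by simp
  qed
  have 4: "(\<Sum>i<Suc n. ?A i j) = 1" if "j < Suc n" for j
  proof (cases "j = c")
    case True
    have "(\<Sum>i<Suc n. ?A i j) = (\<Sum>i<n. ?A i j) + ?A n j" by simp
    also have "(\<Sum>i<n. ?A i j) = 0" by (rule sum.neutral) (auto simp: ins_def True)
    finally show ?thesis by (simp add: ins_def True)
  next
    case False
    let ?j = "if j < c then j else j - 1"
    have jl: "?j < n" using that False c by auto
    have "(\<Sum>i<Suc n. ?A i j) = (\<Sum>i<n. ?A i j) + ?A n j" by simp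
    also have "?A n j = 0" using False by (simp add: ins_def)
    also have "(\<Sum>i<n. ?A i j) = (\<Sum>i<n. B i ?j)"
      by (rule sum.cong) (use that False in \<open>auto simp: ins_def\<close>)
    finally show ?thesis using cl jl by simp
  qed
  show ?thesis using 1 2 3 4 by (simp add: Perm_def)
qed

lemma ins_inj:
  assumes "c \<le> n" "c' \<le> n" "B \<in> Perm n" "B' \<in> Perm n" "ins n c B = ins n c' B'"
  shows "c = c' \<and> B = B'"
proof -
  have "ins n c B n c = ins n c' B' n c" using assms(5) by simp
  then have cc: "c = c'" by (simp add: ins_def split: if_splits)
  have "B i j = B' i j" for i j
  proof (cases "i < n \<and> j < n")
    case True
    have "B i j = ins n c B i (gsh c j)" using True assms(1) by (simp only: ins_gsh)
    also have "\<dots> = ins n c B' i (gsh c j)" using assms(5) cc by simp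
    also have "\<dots> = B' i j" using True assms(1) by (simp only: ins_gsh)
    finally show ?thesis .
  next
    case False
    then show ?thesis using assms(3,4) by (auto simp: Perm_def)
  qed
  then show ?thesis using cc by auto
qed

lemma ins_surj:
  assumes A: "A \<in> Perm (Suc n)"
  shows "\<exists>c\<le>n. \<exists>B\<in>Perm n. A = ins n c B"
proof -
  have z: "\<forall>i j. (Suc n \<le> i \<or> Suc n \<le> j) \<longrightarrow> A i j = 0" and e: "\<forall>i<Suc n. \<forall>j<Suc n. A i j \<in> {0, 1}"
    and r: "\<forall>i<Suc n. (\<Sum>j<Suc n. A i j) = 1" and cl: "\<forall>j<Suc n. (\<Sum>i<Suc n. A i j) = 1"
    using A by (auto simp: Perm_def)
  obtain c where c: "c \<in> {..<Suc n}" "A n c = 1"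
    using sum01_ex[of "{..<Suc n}" "A n"] e r by auto
  have cn: "c \<le> n" using c by simp
  have rown: "A n j = 0" if "j \<noteq> c" for j
  proof (cases "j < Suc n")
    case True
    show ?thesis
      by (rule sum01_other[of "{..<Suc n}" "A n" c]) (use e r c True that in auto)
  qed (use z in auto)
  have colc: "A i c = 0" if "i < n" for i
    by (rule sum01_other[of "{..<Suc n}" "\<lambda>i. A i c" n]) (use e cl c that in auto)
  define B where "B = (\<lambda>i j. if i < n \<and> j < n then A i (gsh c j) else 0)"
  have "B \<in> Perm n"
  proof -
    have 1: "\<forall>i j. (n \<le> i \<or> n \<le> j) \<longrightarrow> B i j = 0" by (auto simp: B_def)
    have 2: "\<forall>i<n. \<forall>j<n. B i j \<in> {0,1}" using e gsh_less[OF cn] by (auto simp: B_def)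
    have 3: "(\<Sum>j<n. B i j) = 1" if "i < n" for i
    proof -
      have "(\<Sum>j<n. B i j) = (\<Sum>j<n. A i (gsh c j))" by (rule sum.cong) (auto simp: B_def that)
      also have "\<dots> = (\<Sum>j<Suc n. A i j)" by (rule sum_skip[symmetric, OF cn]) (simp add: colc that)
      finally show ?thesis using r that by simp
    qed
    have 4: "(\<Sum>i<n. B i j) = 1" if "j < n" for j
    proof -
      have "(\<Sum>i<n. B i j) = (\<Sum>i<n. A i (gsh c j))" by (rule sum.cong) (auto simp: B_def that)
      also have "\<dots> = (\<Sum>i<Suc n. A i (gsh c j))" using rown[OF gsh_ne] by simp
      finally show ?thesis using cl gsh_less[OF cn that] by simp
    qed
    show ?thesis using 1 2 3 4 by (simp add: Perm_def)
  qed
  moreover have "A = ins n c B"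
  proof (intro ext)
    fix i j
    show "A i j = ins n c B i j"
    proof (cases "i < n \<and> j < Suc n \<and> j \<noteq> c")
      case True
      let ?j = "if j < c then j else j - 1"
      have "?j < n" using True cn by auto
      moreover have "gsh c ?j = j" using True by (auto simp: gsh_def)
      ultimately show ?thesis using True by (simp add: ins_def B_def)
    next
      case False
      then consider "i = n" | "i > n" | "j \<ge> Suc n" | "j = c" "i < n" by linarith
      then show ?thesis
      proof cases
        case 1 then show ?thesis using rown c by (auto simp: ins_def)
      next
        case 2 then show ?thesis using z by (auto simp: ins_def)
      next
        case 3 then show ?thesis using z cn by (auto simp: ins_def)
      next
        case 4 then show ?thesis using colc by (auto simp: ins_def)
      qed
    qed
  qed
  ultimately show ?thesis using cn by blast
qed

lemma Perm_Suc: "Perm (Suc n) = (\<lambda>(c,B). ins n c B) ` ({..n} \<times> Perm n)"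
  using ins_surj ins_Perm by fastforce

lemma Perm_0: "Perm 0 = {\<lambda>i j. 0}"
  by (auto simp: Perm_def)

lemma finite_Perm: "finite (Perm n)"
  by (induction n) (auto simp: Perm_Suc Perm_0)

lemma inj_ins: "inj_on (\<lambda>(c,B). ins n c B) ({..n} \<times> Perm n)"
  by (auto simp: inj_on_def dest: ins_inj)

lemma count_lt: "c \<le> n \<Longrightarrow> (\<Sum>j<Suc n. if j < c then (1::int) else 0) = int c"
proof -
  have "(\<Sum>j<m. if j < c then (1::int) else 0) = int (min m c)" for m
    by (induction m) auto
  then show "c \<le> n \<Longrightarrow> ?thesis" by simp
qed

lemma ins_col0: "i < n \<Longrightarrow> ins n c B i c = 0" by (simp add: ins_def)

lemma nu_ins:
  assumes B: "B \<in> Perm n" and c: "c \<le> n"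
  shows "asm_nu (Suc n) (ins n c B) = asm_nu n B + int c"
proof -
  let ?A = "ins n c B"
  define h where "h i i' j j' = (if i < i' \<and> j < j' then ?A i j * ?A i' j' else 0)" for i i' j j'
  have cl: "\<forall>j<n. (\<Sum>i<n. B i j) = 1" using B by (auto simp: Perm_def)
  have "asm_nu (Suc n) ?A = (\<Sum>i<Suc n. \<Sum>i'<Suc n. \<Sum>j<Suc n. \<Sum>j'<Suc n. h i i' j j')"
    by (simp add: asm_nu_def h_def)
  also have "\<dots> = (\<Sum>i<n. \<Sum>i'<Suc n. \<Sum>j<Suc n. \<Sum>j'<Suc n. h i i' j j')"
    by (simp add: h_def)
  also have "\<dots> = (\<Sum>i<n. \<Sum>i'<n. \<Sum>j<Suc n. \<Sum>j'<Suc n. h i i' j j')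
      + (\<Sum>i<n. \<Sum>j<Suc n. \<Sum>j'<Suc n. h i n j j')"
    by (simp add: sum.distrib)
  also have "(\<Sum>i<n. \<Sum>i'<n. \<Sum>j<Suc n. \<Sum>j'<Suc n. h i i' j j')
     = (\<Sum>i<n. \<Sum>i'<n. \<Sum>j<n. \<Sum>j'<n. if i < i' \<and> j < j' then B i j * B i' j' else 0)"
  proof (rule sum.cong[OF refl], rule sum.cong[OF refl])
    fix i i' assume i: "i \<in> {..<n}" and i': "i' \<in> {..<n}"
    have hc1: "h i i' c j' = 0" for j' using ins_col0[of i n c B] i by (simp add: h_def)
    have hc2: "h i i' j c = 0" for j using ins_col0[of i' n c B] i' by (simp add: h_def)
    have "(\<Sum>j<Suc n. \<Sum>j'<Suc n. h i i' j j') = (\<Sum>j<n. \<Sum>j'<Suc n. h i i' (gsh c j) j')"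
      by (rule sum_skip[OF c]) (simp add: hc1)
    also have "\<dots> = (\<Sum>j<n. \<Sum>j'<n. h i i' (gsh c j) (gsh c j'))"
      by (intro sum.cong refl sum_skip[OF c]) (simp add: hc2)
    also have "\<dots> = (\<Sum>j<n. \<Sum>j'<n. if i < i' \<and> j < j' then B i j * B i' j' else 0)"
      by (intro sum.cong refl) (use i i' c in \<open>simp add: h_def ins_gsh gsh_mono\<close>)
    finally show "(\<Sum>j<Suc n. \<Sum>j'<Suc n. h i i' j j') = \<dots>" .
  qed
  also have "\<dots> = asm_nu n B" by (simp add: asm_nu_def)
  also have "(\<Sum>i<n. \<Sum>j<Suc n. \<Sum>j'<Suc n. h i n j j') = (\<Sum>i<n. \<Sum>j<Suc n. if j < c then ?A i j else 0)"
  proof (intro sum.cong refl)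
    fix i j assume i: "i \<in> {..<n}" and j: "j \<in> {..<Suc n}"
    have "(\<Sum>j'<Suc n. h i n j j') = (\<Sum>j'<Suc n. if j' = c then (if j < c then ?A i j else 0) else 0)"
      by (intro sum.cong refl) (use i in \<open>auto simp: h_def ins_def\<close>)
    also have "\<dots> = (if j < c then ?A i j else 0)" using c by simp
    finally show "(\<Sum>j'<Suc n. h i n j j') = (if j < c then ?A i j else 0)" .
  qed
  also have "\<dots> = (\<Sum>j<Suc n. \<Sum>i<n. if j < c then ?A i j else 0)"
    by (rule sum.swap)
  also have "\<dots> = (\<Sum>j<Suc n. if j < c then (1::int) else 0)"
  proof (intro sum.cong refl)
    fix j assume j: "j \<in> {..<Suc n}"
    show "(\<Sum>i<n. if j < c then ?A i j else 0) = (if j < c then 1 else 0)"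
    proof (cases "j < c")
      case True
      have "(\<Sum>i<n. ?A i j) = (\<Sum>i<n. B i j)"
        by (intro sum.cong refl) (use True c in \<open>auto simp: ins_def\<close>)
      then show ?thesis using True cl c by simp
    qed simp
  qed
  also have "\<dots> = int c" using c by (rule count_lt)
  finally show ?thesis .
qed

lemma Perm_eq: "{A \<in> ASM n. asm_mu n A = 0} = Perm n"
proof (intro set_eqI iffI)
  fix A assume "A \<in> {A \<in> ASM n. asm_mu n A = 0}"
  then have a: "A \<in> ASM n" and m: "asm_mu n A = 0" by auto
  have fin: "finite {(i, j). i < n \<and> j < n \<and> A i j = -1}"
    by (rule finite_subset[of _ "{..<n} \<times> {..<n}"]) auto
  then have "{(i, j). i < n \<and> j < n \<and> A i j = -1} = {}" using m by (simp add: asm_mu_def)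
  then have "\<forall>i<n. \<forall>j<n. A i j \<noteq> -1" by auto
  then show "A \<in> Perm n" using a by (auto simp: ASM_def Perm_def)
next
  fix A assume p: "A \<in> Perm n"
  have e: "\<forall>i<n. \<forall>j<n. A i j \<in> {0, 1}"
    and r: "\<forall>i<n. (\<Sum>j<n. A i j) = 1" and cl: "\<forall>j<n. (\<Sum>i<n. A i j) = 1"
    using p by (auto simp: Perm_def)
  have rows: "alt_signs (\<lambda>j. A i j) n" if "i < n" for i
    unfolding alt_signs_def
  proof (intro allI impI, elim conjE)
    fix j j' assume jj: "j < j'" "j' < n" "A i j \<noteq> 0" "A i j' \<noteq> 0"
    have "A i j = 1" using e[rule_format, of i j] jj that by auto
    moreover have "A i j' = 1" using e[rule_format, of i j'] jj that by auto
    moreover have "A i j' = 0"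
      by (rule sum01_other[of "{..<n}" "A i" j]) (use e r jj that calculation in auto)
    ultimately show "A i j' = - A i j" by simp
  qed
  have cols: "alt_signs (\<lambda>i. A i j) n" if "j < n" for j
    unfolding alt_signs_def
  proof (intro allI impI, elim conjE)
    fix i i' assume jj: "i < i'" "i' < n" "A i j \<noteq> 0" "A i' j \<noteq> 0"
    have "A i j = 1" using e[rule_format, of i j] jj that by auto
    moreover have "A i' j = 1" using e[rule_format, of i' j] jj that by auto
    moreover have "A i' j = 0"
      by (rule sum01_other[of "{..<n}" "\<lambda>i. A i j" i]) (use e cl jj that calculation in auto)
    ultimately show "A i' j = - A i j" by simp
  qed
  have E: "{(i, j). i < n \<and> j < n \<and> A i j = -1} = {}"
  proof (rule equals0I)
    fix p assume "p \<in> {(i, j). i < n \<and> j < n \<and> A i j = -1}"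
    then obtain i j where "p = (i,j)" "i < n" "j < n" "A i j = -1" by auto
    then show False using e[rule_format, of i j] by auto
  qed
  have "asm_mu n A = 0" unfolding asm_mu_def E by simp
  moreover have "A \<in> ASM n" using p rows cols by (auto simp: ASM_def Perm_def)
  ultimately show "A \<in> {A \<in> ASM n. asm_mu n A = 0}" by simp
qed

definition Tm :: "complex \<Rightarrow> nat \<Rightarrow> (nat \<Rightarrow> nat \<Rightarrow> int) \<Rightarrow> complex" where
  "Tm Q m A = Q powi (2 * asm_nu m A) * (cnj Q) powi (int (m * (m - 1)) - 2 * asm_nu m A)"

definition Sm :: "complex \<Rightarrow> nat \<Rightarrow> complex" where
  "Sm Q n = (\<Sum>c\<le>n. Q ^ (2 * c) * cnj Q ^ (2 * (n - c)))"

lemma Tm_ins: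
  assumes Q: "Q \<noteq> 0" and B: "B \<in> Perm n" and c: "c \<le> n"
  shows "Tm Q (Suc n) (ins n c B) = Tm Q n B * (Q ^ (2 * c) * cnj Q ^ (2 * (n - c)))"
proof -
  let ?v = "asm_nu n B"
  have Q': "cnj Q \<noteq> 0" using Q by simp
  have e1: "int (Suc n * (Suc n - 1)) = int (n * (n - 1)) + 2 * int n" by (cases n) (auto simp: algebra_simps)
  have x1: "2 * (?v + int c) = 2 * ?v + int (2 * c)" by simp
  have x2: "int (Suc n * (Suc n - 1)) - 2 * (?v + int c) = (int (n * (n - 1)) - 2 * ?v) + int (2 * (n - c))"
    using e1 c by (simp add: of_nat_diff)
  have p1: "Q powi (2 * (?v + int c)) = Q powi (2 * ?v) * Q ^ (2 * c)"
    by (subst x1, subst power_int_add, simp add: Q, subst power_int_of_nat, rule refl)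
  have p2: "cnj Q powi (int (Suc n * (Suc n - 1)) - 2 * (?v + int c)) = cnj Q powi (int (n * (n - 1)) - 2 * ?v) * cnj Q ^ (2 * (n - c))"
    apply (subst x2)
    apply (subst power_int_add)
    apply (simp add: Q)
    apply (subst power_int_of_nat)
    apply (rule refl)
    done
  show ?thesis
    unfolding Tm_def nu_ins[OF B c] p1 p2 by (simp add: algebra_simps)
qed

lemma F_rec:
  assumes Q: "Q \<noteq> 0"
  shows "(\<Sum>A\<in>Perm (Suc n). Tm Q (Suc n) A) = (\<Sum>A\<in>Perm n. Tm Q n A) * Sm Q n"
proof -
  have "(\<Sum>A\<in>Perm (Suc n). Tm Q (Suc n) A) = (\<Sum>p\<in>{..n} \<times> Perm n. Tm Q (Suc n) ((\<lambda>(c,B). ins n c B) p))"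
    unfolding Perm_Suc sum.reindex[OF inj_ins] by (intro sum.cong refl) (auto split: prod.split)
  also have "\<dots> = (\<Sum>c\<le>n. \<Sum>B\<in>Perm n. Tm Q (Suc n) (ins n c B))"
    by (simp add: sum.cartesian_product split_def)
  also have "\<dots> = (\<Sum>c\<le>n. \<Sum>B\<in>Perm n. Tm Q n B * (Q ^ (2 * c) * cnj Q ^ (2 * (n - c))))"
    by (intro sum.cong refl) (simp add: Tm_ins Q)
  also have "\<dots> = (\<Sum>A\<in>Perm n. Tm Q n A) * Sm Q n"
    by (simp add: Sm_def sum_distrib_left sum_distrib_right sum.swap[of _ "{..n}"])
  finally show ?thesis .
qed

lemma F_prod:
  assumes Q: "Q \<noteq> 0"
  shows "(\<Sum>A\<in>Perm n. Tm Q n A) = (\<Prod>m<n. Sm Q m)"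
proof (induction n)
  case 0
  then show ?case by (simp add: Perm_0 Tm_def asm_nu_def)
next
  case (Suc n)
  then show ?case by (simp add: F_rec Q)
qed



lemma dirichlet:
  fixes t :: real
  assumes "t = 0 \<or> \<bar>t\<bar> * (real m + 1) < pi"
  shows "\<exists>D>0. (\<Sum>c\<le>m. cis (t * (2 * real c - real m))) = complex_of_real D"
proof (cases "t = 0")
  case True
  then show ?thesis by (intro exI[of _ "real m + 1"]) auto
next
  case False
  then have tb: "\<bar>t\<bar> * (real m + 1) < pi" using assms by auto
  define S where "S = (\<Sum>c\<le>m. cis (t * (2 * real c - real m)))"
  define f where "f c = cis (t * (2 * real c - real m - 1))" for c :: nat
  have "(cis t - cis (-t)) * S = (\<Sum>c<Suc m. f (Suc c) - f c)"
    unfolding S_def lessThan_Suc_atMost sum_distrib_left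
  proof (intro sum.cong refl)
    fix c
    show "(cis t - cis (-t)) * cis (t * (2 * real c - real m)) = f (Suc c) - f c"
      unfolding f_def left_diff_distrib cis_mult by (simp add: algebra_simps)
  qed
  also have "\<dots> = f (Suc m) - f 0" by (rule sum_lessThan_telescope)
  also have "\<dots> = cis (t * (real m + 1)) - cis (- (t * (real m + 1)))"
  proof -
    have "t * (2 * real (Suc m) - real m - 1) = t * (real m + 1)" by (simp add: algebra_simps)
    moreover have "t * (2 * real 0 - real m - 1) = - (t * (real m + 1))" by (simp add: algebra_simps)
    ultimately show ?thesis unfolding f_def by metis
  qed
  finally have eq: "(cis t - cis (-t)) * S = cis (t * (real m + 1)) - cis (- (t * (real m + 1)))" .
  have e1: "cis t - cis (-t) = complex_of_real (2 * sin t) * \<i>" by (simp add: complex_eq_iff)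
  have e2: "cis (t * (real m + 1)) - cis (- (t * (real m + 1))) = complex_of_real (2 * sin (t * (real m + 1))) * \<i>"
    by (simp add: complex_eq_iff)
  have tpi: "\<bar>t\<bar> < pi" using tb by (smt (verit) mult_le_cancel_left1 of_nat_0_le_iff)
  have sgn: "0 < sin (t * (real m + 1)) / sin t"
  proof (cases "t > 0")
    case True
    have "0 < sin t" using True tpi by (intro sin_gt_zero) auto
    moreover have "0 < sin (t * (real m + 1))" using True tb by (intro sin_gt_zero) auto
    ultimately show ?thesis by simp
  next
    case f: False
    then have tn: "t < 0" using False by simp
    have "0 < sin (-t)" using tn tpi by (intro sin_gt_zero) auto
    moreover have "0 < sin (- (t * (real m + 1)))" using tn tb by (intro sin_gt_zero) (auto simp: abs_mult mult_neg_pos)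
    ultimately show ?thesis by (simp add: divide_neg_neg)
  qed
  have sne: "sin t \<noteq> 0" using sgn by auto
  have "S = complex_of_real (sin (t * (real m + 1)) / sin t)"
  proof -
    have "complex_of_real (2 * sin t) * \<i> * S = complex_of_real (2 * sin (t * (real m + 1))) * \<i>"
      using eq e1 e2 by simp
    then have "complex_of_real (sin t) * S = complex_of_real (sin (t * (real m + 1)))"
      by (simp add: algebra_simps)
    then show ?thesis using sne by (simp add: field_simps)
  qed
  then show ?thesis using sgn unfolding S_def by blast
qed

lemma Sm_polar:
  assumes Q: "Q = complex_of_real r * cis \<theta>"
  shows "Sm Q m = complex_of_real (r ^ (2 * m)) * (\<Sum>c\<le>m. cis ((2 * \<theta>) * (2 * real c - real m)))"
  unfolding Sm_def sum_distrib_left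
proof (intro sum.cong refl)
  fix c assume c: "c \<in> {..m}"
  have cq: "cnj Q = complex_of_real r * cis (- \<theta>)" using Q by (simp add: cis_cnj)
  have "Q ^ (2 * c) * cnj Q ^ (2 * (m - c)) = complex_of_real (r ^ (2 * c) * r ^ (2 * (m - c)))
      * (cis (real (2 * c) * \<theta>) * cis (real (2 * (m - c)) * (- \<theta>)))"
    unfolding cq Q power_mult_distrib DeMoivre[symmetric] by (simp add: algebra_simps cis_cnj)
  also have "r ^ (2 * c) * r ^ (2 * (m - c)) = r ^ (2 * m)"
  proof -
    have "2 * c + 2 * (m - c) = 2 * m" using c by simp
    then show ?thesis by (simp add: power_add[symmetric])
  qed
  also have "cis (real (2 * c) * \<theta>) * cis (real (2 * (m - c)) * (- \<theta>)) = cis ((2 * \<theta>) * (2 * real c - real m))"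
    using c by (simp add: cis_mult of_nat_diff algebra_simps)
  finally show "Q ^ (2 * c) * cnj Q ^ (2 * (m - c)) = complex_of_real (r ^ (2 * m)) * cis ((2 * \<theta>) * (2 * real c - real m))" .
qed

lemma Qa_cis: "Qa \<alpha> x y = cis (pi * \<alpha> / 2) * complex_of_real x + cis (- (pi * \<alpha> / 2)) * complex_of_real y"
proof -
  have "exp (\<i> * complex_of_real (pi * \<alpha> / 2)) = cis (pi * \<alpha> / 2)" by (simp add: cis_conv_exp)
  moreover have "exp (- \<i> * complex_of_real (pi * \<alpha> / 2)) = cis (- (pi * \<alpha> / 2))" by (simp add: cis_conv_exp)
  ultimately show ?thesis unfolding Qa_def by simp
qed

lemma Qa_Re: "Re (Qa \<alpha> x y) = (x + y) * cos (pi * \<alpha> / 2)"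
  by (simp add: Qa_cis algebra_simps)

lemma Qa_Im: "Im (Qa \<alpha> x y) = (x - y) * sin (pi * \<alpha> / 2)"
  by (simp add: Qa_cis algebra_simps)

theorem proposition3:
  fixes n :: nat and \<alpha> x y :: real
  assumes "n \<ge> 2" and "0 \<le> \<alpha>" and "\<alpha> < 1" and "\<alpha> \<le> 1 / real n"
    and "x > 0" and "y > 0"
  shows "Im (F0 n \<alpha> x y) = 0 \<and> Re (F0 n \<alpha> x y) > 0"
proof -
  define Q where "Q = Qa \<alpha> x y"
  define \<phi> where "\<phi> = pi * \<alpha> / 2"
  have \<phi>0: "0 \<le> \<phi>" using assms by (simp add: \<phi>_def)
  have \<phi>1: "\<phi> < pi / 2" using assms by (simp add: \<phi>_def)
  have cph: "cos \<phi> > 0" using \<phi>0 \<phi>1 by (intro cos_gt_zero_pi) auto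
  have ReQ: "Re Q = (x + y) * cos \<phi>" and ImQ: "Im Q = (x - y) * sin \<phi>"
    unfolding Q_def \<phi>_def by (rule Qa_Re, rule Qa_Im)
  have Rpos: "Re Q > 0" using ReQ cph assms by simp
  then have Qnz: "Q \<noteq> 0" by auto
  define u where "u = Im Q / Re Q"
  define \<theta> where "\<theta> = arctan u"
  have ct: "cos \<theta> > 0" unfolding \<theta>_def using arctan_bounded[of u] by (intro cos_gt_zero_pi) auto
  define r where "r = Re Q / cos \<theta>"
  have rpos: "r > 0" using Rpos ct by (simp add: r_def)
  have Qpol: "Q = complex_of_real r * cis \<theta>"
  proof -
    have "tan \<theta> = u" unfolding \<theta>_def by (rule tan_arctan)
    then have "sin \<theta> = u * cos \<theta>" using ct by (simp add: tan_def field_simps)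
    then have "r * sin \<theta> = Im Q" using ct Rpos by (simp add: r_def u_def field_simps)
    moreover have "r * cos \<theta> = Re Q" using ct by (simp add: r_def)
    ultimately show ?thesis by (simp add: complex_eq_iff)
  qed
  have tb: "\<theta> = 0 \<or> \<bar>\<theta>\<bar> < \<phi>"
  proof (cases "\<phi> = 0")
    case True
    then have "u = 0" by (simp add: u_def ImQ)
    then show ?thesis by (simp add: \<theta>_def)
  next
    case False
    then have \<phi>p: "\<phi> > 0" using \<phi>0 by simp
    have sph: "sin \<phi> > 0" using \<phi>p \<phi>1 by (intro sin_gt_zero) auto
    have "\<bar>u\<bar> = \<bar>x - y\<bar> * sin \<phi> / ((x + y) * cos \<phi>)"
      using sph cph assms by (simp add: u_def ImQ ReQ abs_mult abs_divide)
    also have "\<dots> < (x + y) * sin \<phi> / ((x + y) * cos \<phi>)"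
      using sph cph assms by (intro divide_strict_right_mono mult_strict_right_mono) auto
    also have "\<dots> = tan \<phi>" using assms by (simp add: tan_def)
    finally have ut: "\<bar>u\<bar> < tan \<phi>" .
    have at: "arctan (tan \<phi>) = \<phi>" using \<phi>0 \<phi>1 by (intro arctan_tan) auto
    have "arctan u < \<phi>" using ut at arctan_less_iff[of u "tan \<phi>"] by auto
    moreover have "arctan (- u) < \<phi>" using ut at arctan_less_iff[of "- u" "tan \<phi>"] by auto
    ultimately have "\<bar>arctan u\<bar> < \<phi>" by (simp add: arctan_minus)
    then show ?thesis by (simp add: \<theta>_def)
  qed
  have an: "\<alpha> * real n \<le> 1" using assms by (simp add: field_simps)
  have Sm_ok: "\<exists>D>0. Sm Q m = complex_of_real D" if "m < n" for m
  proof -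
    have "2 * \<theta> = 0 \<or> \<bar>2 * \<theta>\<bar> * (real m + 1) < pi"
    proof (cases "\<theta> = 0")
      case False
      then have th: "\<bar>\<theta>\<bar> < \<phi>" using tb by simp
      have "real m + 1 \<le> real n" using that by simp
      then have "\<bar>2 * \<theta>\<bar> * (real m + 1) \<le> 2 * \<bar>\<theta>\<bar> * real n"
        by (simp add: abs_mult mult_left_mono)
      also have "\<dots> < 2 * \<phi> * real n" using th assms by (intro mult_strict_right_mono) auto
      also have "\<dots> = pi * (\<alpha> * real n)" by (simp add: \<phi>_def)
      also have "\<dots> \<le> pi" using an by simp
      finally show ?thesis by simp
    qed simp
    from dirichlet[OF this] obtain D where D: "D > 0"
      "(\<Sum>c\<le>m. cis (2 * \<theta> * (2 * real c - real m))) = complex_of_real D" by blast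
    show ?thesis
      by (rule exI[of _ "r ^ (2 * m) * D"]) (use D rpos in \<open>simp add: Sm_polar[OF Qpol]\<close>)
  qed
  then obtain D where D: "\<And>m. m < n \<Longrightarrow> D m > 0 \<and> Sm Q m = complex_of_real (D m)"
    by metis
  have "F0 n \<alpha> x y = (\<Sum>A\<in>Perm n. Tm Q n A)"
    unfolding F0_def Perm_eq Tm_def Q_def ..
  also have "\<dots> = (\<Prod>m<n. Sm Q m)" by (rule F_prod[OF Qnz])
  also have "\<dots> = (\<Prod>m<n. complex_of_real (D m))" by (intro prod.cong refl) (use D in auto)
  also have "\<dots> = complex_of_real (\<Prod>m<n. D m)" by simp
  finally have "F0 n \<alpha> x y = complex_of_real (\<Prod>m<n. D m)" .
  moreover have "(\<Prod>m<n. D m) > 0" using D by (intro prod_pos) auto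
  ultimately show ?thesis by (metis Im_complex_of_real Re_complex_of_real)
qed

end
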